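(* For every $w\in S_n$, the map $\Psi$ is a bijection from the set of chains from $w$ to $w_0$ compatible with $(n-1,\dots,1)$ to $\mathrm{FT}(w)$.
   Context: Permutations in one-line notation, $w_0=[n,\dots,1]$, $wt_{i,j}$ is $w$ with positions $i<j$ swapped, $\ell$ the number of inversions. $u\lessdot w$ iff $w=ut_{i,j}$, $i<j$, $\ell(w)=\ell(u)+1$; $u\lessdot_k w$ iff moreover $i\le k<j$. A $k$-chain is increasing if the smaller of the two values exchanged at each step strictly increases along the chain. $(w_1,\dots,w_d)$ is compatible with $(k_1,\dots,k_{d-1})$ if for each $s$ there is an increasing $k_s$-chain from $w_s$ to $w_{s+1}$ (unique when it exists). Flagged tableaux: staircase grid with a cell $(i,j)$ whenever $i+j\le n$, each cell of row $i$ empty or filled with an element of $[i]$. Reading word: scan rows top to bottom, each row right to left, writing $(i,n+1-c)$ for a cell in column $c$ filled with $i$. $T$ with reading word $(a_1,b_1),\dots,(a_d,b_d)$ is associated with $w$ if, with $v_0=w_0$ and $v_s=v_{s-1}t_{a_s,b_s}$, one has $v_s\lessdot v_{s-1}$ for all $s$ and $v_d=w$; $\mathrm{FT}(w)$ is the set of these. The map $\Psi$: let $C=(u_{n-1},\dots,u_0)$ be a chain from $u_{n-1}=w$ to $u_0=w_0$ compatible with $(n-1,\dots,1)$. For $k\in[n-1]$, write the increasing $k$-chain from $u_k$ to $u_{k-1}$ as $u_k=v_{d}\lessdot_k v_{d-1}\lessdot_k\cdots\lessdot_k v_0=u_{k-1}$ with $v_s=v_{s-1}t_{a_s,b_s}$,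 $a_s\le k<b_s$. Place the number $a_s$ in row $k$, column $n+1-b_s$, for each $s\in[d]$, leaving all other cells empty. The resulting flagged tableau is $\Psi(C)$. *)

theory Defs
  imports Main
begin

text \<open>Permutations of [n] in one-line notation are lists; positions are 1-indexed.\<close>

definition perms :: "nat \<Rightarrow> nat list set" where
  "perms n = {w. distinct w \<and> set w = {1..n}}"

definition w0 :: "nat \<Rightarrow> nat list" where
  "w0 n = rev [1..<n+1]"

definition swap :: "nat list \<Rightarrow> nat \<Rightarrow> nat \<Rightarrow> nat list" where
  "swap w i j = w[i - 1 := w ! (j - 1), j - 1 := w ! (i - 1)]"

definition ninv :: "nat list \<Rightarrow> nat" where
  "ninv w = card {(i, j). i < j \<and> j < length w \<and> w ! i > w ! j}"

definition cover :: "nat list \<Rightarrow> nat list \<Rightarrow> bool" where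
  "cover u w \<longleftrightarrow> (\<exists>i j. 1 \<le> i \<and> i < j \<and> j \<le> length u \<and>
      w = swap u i j \<and> ninv w = ninv u + 1)"

definition kcover :: "nat \<Rightarrow> nat list \<Rightarrow> nat list \<Rightarrow> bool" where
  "kcover k u w \<longleftrightarrow> (\<exists>i j. 1 \<le> i \<and> i \<le> k \<and> k < j \<and> j \<le> length u \<and>
      w = swap u i j \<and> ninv w = ninv u + 1)"

definition trans_pos :: "nat list \<Rightarrow> nat list \<Rightarrow> nat \<times> nat" where
  "trans_pos x y = (THE (i, j). 1 \<le> i \<and> i < j \<and> j \<le> length x \<and> y = swap x i j)"

definition exch_min :: "nat list \<Rightarrow> nat list \<Rightarrow> nat" where
  "exch_min x y = (case trans_pos x y of (i, j) \<Rightarrow> min (x ! (i - 1)) (x ! (j - 1)))"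

definition kchain :: "nat \<Rightarrow> nat list list \<Rightarrow> bool" where
  "kchain k xs \<longleftrightarrow> xs \<noteq> [] \<and> (\<forall>i. Suc i < length xs \<longrightarrow> kcover k (xs ! i) (xs ! Suc i))"

definition incr_kchain :: "nat \<Rightarrow> nat list list \<Rightarrow> bool" where
  "incr_kchain k xs \<longleftrightarrow> kchain k xs \<and>
     (\<forall>i. i + 2 < length xs \<longrightarrow>
        exch_min (xs ! i) (xs ! (i + 1)) < exch_min (xs ! (i + 1)) (xs ! (i + 2)))"

definition incr_kchain_from :: "nat \<Rightarrow> nat list \<Rightarrow> nat list \<Rightarrow> nat list list \<Rightarrow> bool" where
  "incr_kchain_from k u v xs \<longleftrightarrow> incr_kchain k xs \<and> hd xs = u \<and> last xs = v"

definition compatible :: "nat list list \<Rightarrow> nat list \<Rightarrow> bool" where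
  "compatible ws ks \<longleftrightarrow> length ks + 1 = length ws \<and>
     (\<forall>s < length ks. \<exists>xs. incr_kchain_from (ks ! s) (ws ! s) (ws ! (s + 1)) xs)"

text \<open>Chains C = (u_{n-1}, ..., u_0) from w to w0 compatible with (n-1,...,1);
  C ! 0 = u_{n-1}, C ! (n-1) = u_0.\<close>
definition chains :: "nat \<Rightarrow> nat list \<Rightarrow> nat list list set" where
  "chains n w = {C. length C = n \<and> hd C = w \<and> last C = w0 n \<and> compatible C (rev [1..<n])}"

text \<open>Flagged tableaux: partial fillings of cells (i,j) (row i, column j).\<close>
type_synonym tableau = "nat \<times> nat \<Rightarrow> nat option"

definition flagged :: "nat \<Rightarrow> tableau \<Rightarrow> bool" where
  "flagged n T \<longleftrightarrow> (\<forall>i j. (T (i, j) \<noteq> None \<longrightarrow> 1 \<le> i \<and> 1 \<le> j \<and> i + j \<le> n) \<and>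
      (\<forall>a. T (i, j) = Some a \<longrightarrow> 1 \<le> a \<and> a \<le> i))"

definition reading_word :: "nat \<Rightarrow> tableau \<Rightarrow> (nat \<times> nat) list" where
  "reading_word n T = concat (map (\<lambda>i. concat (map (\<lambda>c.
      case T (i, c) of None \<Rightarrow> [] | Some a \<Rightarrow> [(a, n + 1 - c)]) (rev [1..<n + 1 - i]))) [1..<n])"

definition associated :: "nat \<Rightarrow> tableau \<Rightarrow> nat list \<Rightarrow> bool" where
  "associated n T w \<longleftrightarrow>
     (let rw = reading_word n T;
          v = (\<lambda>s. foldl (\<lambda>u (a, b). swap u a b) (w0 n) (take s rw))
      in (\<forall>s \<in> {1..length rw}. cover (v s) (v (s - 1))) \<and> v (length rw) = w)"

definition FT :: "nat \<Rightarrow> nat list \<Rightarrow> tableau set" where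
  "FT n w = {T. flagged n T \<and> associated n T w}"

definition chain_pairs :: "nat list list \<Rightarrow> (nat \<times> nat) list" where
  "chain_pairs xs = map (\<lambda>i. trans_pos (xs ! i) (xs ! (i + 1))) [0..<length xs - 1]"

definition Psi :: "nat \<Rightarrow> nat list list \<Rightarrow> tableau" where
  "Psi n C = (\<lambda>(k, c).
     let ch = (THE xs. incr_kchain_from k (C ! (n - 1 - k)) (C ! (n - k)) xs);
         P = set (chain_pairs ch)
     in if 1 \<le> k \<and> k < n \<and> 1 \<le> c \<and> k + c \<le> n \<and> (\<exists>a. (a, n + 1 - c) \<in> P)
        then Some (THE a. (a, n + 1 - c) \<in> P) else None)"

end

theory Submission
  imports Defs
begin


lemma swap_len[simp]: "length (swap u i j) = length u"
  by (simp add: swap_def)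

lemma swap_nth: "p < length u \<Longrightarrow> 1 \<le> i \<Longrightarrow> i \<le> length u \<Longrightarrow> 1 \<le> j \<Longrightarrow> j \<le> length u \<Longrightarrow>
  swap u i j ! p = (if p = j - 1 then u ! (i - 1) else if p = i - 1 then u ! (j - 1) else u ! p)"
  by (simp add: swap_def nth_list_update)

lemma swap_invol: "1 \<le> i \<Longrightarrow> i \<le> length u \<Longrightarrow> 1 \<le> j \<Longrightarrow> j \<le> length u \<Longrightarrow>
  swap (swap u i j) i j = u"
  by (rule nth_equalityI) (auto simp: swap_nth)

lemma swap_distinct: "1 \<le> i \<Longrightarrow> i \<le> length u \<Longrightarrow> 1 \<le> j \<Longrightarrow> j \<le> length u \<Longrightarrow>
  distinct (swap u i j) = distinct u"
  by (simp add: swap_def)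

lemma swap_set: "1 \<le> i \<Longrightarrow> i \<le> length u \<Longrightarrow> 1 \<le> j \<Longrightarrow> j \<le> length u \<Longrightarrow>
  set (swap u i j) = set u"
  by (simp add: swap_def)

lemma swap_inj:
  assumes "distinct u" "1 \<le> i" "i < j" "j \<le> length u" "1 \<le> i'" "i' < j'" "j' \<le> length u"
    and "swap u i j = swap u i' j'"
  shows "i = i' \<and> j = j'"
proof -
  have D: "\<And>i j. 1 \<le> i \<Longrightarrow> i < j \<Longrightarrow> j \<le> length u \<Longrightarrow> {p. p < length u \<and> swap u i j ! p \<noteq> u ! p} = {i - 1, j - 1}"
  proof -
    fix i j assume h: "1 \<le> (i::nat)" "i < j" "j \<le> length u"
    have "u ! (i - 1) \<noteq> u ! (j - 1)" using assms(1) h by (simp add: nth_eq_iff_index_eq)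
    then show "{p. p < length u \<and> swap u i j ! p \<noteq> u ! p} = {i - 1, j - 1}"
      using h by (auto simp: swap_nth split: if_splits)
  qed
  have "{i - 1, j - 1} = {i' - 1, j' - 1}"
    using D[of i j] D[of i' j'] assms by simp
  then show ?thesis using assms by (auto simp: doubleton_eq_iff)
qed

definition invs :: "nat list \<Rightarrow> (nat \<times> nat) set" where
  "invs w = {(i, j). i < j \<and> j < length w \<and> w ! i > w ! j}"

lemma ninv_invs: "ninv w = card (invs w)" by (simp add: ninv_def invs_def)

lemma finite_invs: "finite (invs w)"
  by (rule finite_subset[of _ "{..<length w} \<times> {..<length w}"]) (auto simp: invs_def)

lemma ninv_swap_dec:
  assumes ij: "i < j" "j < length u" and gt: "u ! i > u ! j"
  shows "card (invs (u[i := u ! j, j := u ! i])) + 1 + (if (\<exists>m. i < m \<and> m < j \<and> u ! j < u ! m \<and> u ! m < u ! i) then 1 else 0) \<le> card (invs u)"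
proof -
  define w where "w = u[i := u ! j, j := u ! i]"
  have wn: "\<And>p. p < length u \<Longrightarrow> w ! p = (if p = j then u ! i else if p = i then u ! j else u ! p)"
    using ij by (simp add: w_def nth_list_update)
  have lw: "length w = length u" by (simp add: w_def)
  define f where "f = (\<lambda>(p, q). if (p, q) \<in> invs u then (p, q) else if q = i then (p, j) else (i, q))"
  define E where "E = {(i, j)} \<union> {(i, m) | m. i < m \<and> m < j \<and> u ! j < u ! m \<and> u ! m < u ! i}"
  have fin: "finite E"
    by (rule finite_subset[of _ "{..<length u} \<times> {..<length u}"]) (use ij in \<open>auto simp: E_def\<close>)
  have img: "f ` invs w \<subseteq> invs u - E"
  proof
    fix x assume "x \<in> f ` invs w"
    then obtain p q where pq: "(p, q) \<in> invs w" "x = f (p, q)" by auto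
    have pq': "p < q" "q < length u" "w ! p > w ! q" using pq lw by (auto simp: invs_def)
    show "x \<in> invs u - E"
      using pq' pq(2) ij gt wn[of p] wn[of q]
      by (auto simp: f_def E_def invs_def split: if_splits)
  qed
  have inj: "inj_on f (invs w)"
  proof (rule inj_onI)
    fix x y assume x: "x \<in> invs w" and y: "y \<in> invs w" and e: "f x = f y"
    obtain p q where [simp]: "x = (p, q)" by force
    obtain p' q' where [simp]: "y = (p', q')" by force
    have pq': "p < q" "q < length u" "w ! p > w ! q" using x lw by (auto simp: invs_def)
    have pq'': "p' < q'" "q' < length u" "w ! p' > w ! q'" using y lw by (auto simp: invs_def)
    show "x = y"
      using pq' pq'' e ij gt wn[of p] wn[of q] wn[of p'] wn[of q']
      by (auto simp: f_def invs_def split: if_splits)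
  qed
  have "card (invs w) = card (f ` invs w)" using inj by (simp add: card_image)
  also have "\<dots> \<le> card (invs u - E)" by (rule card_mono) (use img finite_invs in auto)
  also have "\<dots> = card (invs u) - card E"
    by (rule card_Diff_subset) (use fin ij gt in \<open>auto simp: E_def invs_def\<close>)
  finally have c1: "card (invs w) \<le> card (invs u) - card E" .
  have cE: "card E \<ge> 1 + (if (\<exists>m. i < m \<and> m < j \<and> u ! j < u ! m \<and> u ! m < u ! i) then 1 else 0)"
  proof (cases "\<exists>m. i < m \<and> m < j \<and> u ! j < u ! m \<and> u ! m < u ! i")
    case True
    then obtain m where m: "i < m" "m < j" "u ! j < u ! m" "u ! m < u ! i" by auto
    have "{(i, j), (i, m)} \<subseteq> E" using m by (auto simp: E_def)
    then have "card {(i, j), (i, m)} \<le> card E" using fin by (rule card_mono[rotated])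
    then show ?thesis using True m by simp
  next
    case False
    have "{(i, j)} \<subseteq> E" by (auto simp: E_def)
    then have "card {(i, j)} \<le> card E" using fin by (rule card_mono[rotated])
    then show ?thesis using False by (simp only: if_not_P) simp
  qed
  have "card E \<le> card (invs u)"
    by (rule card_mono) (use finite_invs ij gt in \<open>auto simp: E_def invs_def\<close>)
  then show ?thesis using c1 cE unfolding w_def by linarith
qed



fun app :: "nat list \<Rightarrow> (nat \<times> nat) list \<Rightarrow> nat list" where
  "app x [] = x"
| "app x ((a, b) # qs) = app (swap x a b) qs"

fun upd :: "nat \<Rightarrow> nat list \<Rightarrow> (nat \<times> nat) list \<Rightarrow> bool" where
  "upd k x [] = True"
| "upd k x ((a, b) # qs) = (1 \<le> a \<and> a \<le> k \<and> k < b \<and> b \<le> length x \<and>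
     ninv (swap x a b) = ninv x + 1 \<and> upd k (swap x a b) qs)"

fun mu :: "nat list \<Rightarrow> (nat \<times> nat) list \<Rightarrow> nat list" where
  "mu x [] = []"
| "mu x ((a, b) # qs) = x ! (a - 1) # mu (swap x a b) qs"

definition rng :: "nat \<Rightarrow> nat \<Rightarrow> (nat \<times> nat) list \<Rightarrow> bool" where
  "rng k n qs \<longleftrightarrow> (\<forall>(a, b) \<in> set qs. 1 \<le> a \<and> a \<le> k \<and> k < b \<and> b \<le> n)"

definition Qk :: "nat \<Rightarrow> nat list \<Rightarrow> bool" where
  "Qk k y \<longleftrightarrow> (\<forall>p q. k \<le> p \<longrightarrow> p < q \<longrightarrow> q < length y \<longrightarrow> y ! q < y ! p)"

lemma rng_Cons[simp]: "rng k n ((a, b) # qs) \<longleftrightarrow> 1 \<le> a \<and> a \<le> k \<and> k < b \<and> b \<le> n \<and> rng k n qs"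
  by (auto simp: rng_def)

lemma rng_Nil[simp]: "rng k n []" by (simp add: rng_def)

lemma rng_append[simp]: "rng k n (qs @ rs) \<longleftrightarrow> rng k n qs \<and> rng k n rs"
  by (auto simp: rng_def)

lemma rng_rev[simp]: "rng k n (rev qs) \<longleftrightarrow> rng k n qs"
  by (auto simp: rng_def)

lemma app_append: "app x (qs @ rs) = app (app x qs) rs"
  by (induction x qs rule: app.induct) auto

lemma app_len[simp]: "length (app x qs) = length x"
  by (induction x qs rule: app.induct) auto

lemma app_foldl: "foldl (\<lambda>u (a, b). swap u a b) x qs = app x qs"
  by (induction x qs rule: app.induct) auto

lemma app_perm: "rng k (length x) qs \<Longrightarrow> distinct (app x qs) = distinct x \<and> set (app x qs) = set x"
  by (induction x qs rule: app.induct) (auto simp: swap_distinct swap_set)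

lemma app_rev: "rng k (length x) qs \<Longrightarrow> app (app x qs) (rev qs) = x"
  by (induction x qs rule: app.induct) (auto simp: app_append swap_invol)

lemma upd_rng: "upd k x qs \<Longrightarrow> rng k (length x) qs"
  by (induction k x qs rule: upd.induct) auto

lemma upd_append: "upd k x (qs @ rs) \<longleftrightarrow> upd k x qs \<and> upd k (app x qs) rs"
  by (induction k x qs rule: upd.induct) auto

lemma upd_step:
  assumes "distinct x" "1 \<le> a" "a < b" "b \<le> length x" "ninv (swap x a b) = ninv x + 1"
  shows "x ! (a - 1) < x ! (b - 1) \<and> (\<forall>m. a < m \<longrightarrow> m < b \<longrightarrow> \<not> (x ! (a - 1) < x ! (m - 1) \<and> x ! (m - 1) < x ! (b - 1)))"
proof -
  have ne: "x ! (a - 1) \<noteq> x ! (b - 1)" using assms by (simp add: nth_eq_iff_index_eq)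
  have lt: "x ! (a - 1) < x ! (b - 1)"
  proof (rule ccontr)
    assume "\<not> ?thesis"
    then have "x ! (a - 1) > x ! (b - 1)" using ne by simp
    from ninv_swap_dec[of "a - 1" "b - 1" x] this assms have "ninv (swap x a b) + 1 \<le> ninv x"
      unfolding ninv_invs swap_def by fastforce
    then show False using assms by simp
  qed
  moreover have "\<not> (x ! (a - 1) < x ! (m - 1) \<and> x ! (m - 1) < x ! (b - 1))" if m: "a < m" "m < b" for m
  proof
    assume h: "x ! (a - 1) < x ! (m - 1) \<and> x ! (m - 1) < x ! (b - 1)"
    define z where "z = swap x a b"
    have zn: "z ! (a - 1) = x ! (b - 1)" "z ! (b - 1) = x ! (a - 1)" "z ! (m - 1) = x ! (m - 1)"
      using assms m by (auto simp: z_def swap_nth)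
    have "z ! (a - 1) > z ! (b - 1)" using zn lt by simp
    moreover have "\<exists>m'. a - 1 < m' \<and> m' < b - 1 \<and> z ! (b - 1) < z ! m' \<and> z ! m' < z ! (a - 1)"
    proof (intro exI[of _ "m - 1"] conjI)
      show "a - 1 < m - 1" "m - 1 < b - 1" using m assms by linarith+
    qed (use h zn in auto)
    ultimately have "ninv (swap z a b) + 2 \<le> ninv z"
      using ninv_swap_dec[of "a - 1" "b - 1" z] assms
      unfolding ninv_invs swap_def[of z] by (simp add: z_def)
    moreover have "swap z a b = x" using assms by (simp add: z_def swap_invol)
    ultimately show False using assms by (simp add: z_def)
  qed
  ultimately show ?thesis by blast
qed



lemma swap_nth_j: "1 \<le> j \<Longrightarrow> j \<le> length u \<Longrightarrow> swap u i j ! (j - 1) = u ! (i - 1)"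
  by (simp add: swap_def)

lemma swap_nth_i: "1 \<le> i \<Longrightarrow> i \<le> length u \<Longrightarrow> i \<noteq> j \<Longrightarrow> 1 \<le> j \<Longrightarrow> swap u i j ! (i - 1) = u ! (j - 1)"
  by (simp add: swap_def nth_list_update)

lemma transp_lt: "transp ((<) :: nat \<Rightarrow> nat \<Rightarrow> bool)" by (auto simp: transp_def)
lemma transp_gt: "transp ((>) :: nat \<Rightarrow> nat \<Rightarrow> bool)" by (auto simp: transp_def)

lemma nth_neq: "distinct x \<Longrightarrow> 1 \<le> a \<Longrightarrow> a \<le> length x \<Longrightarrow> 1 \<le> b \<Longrightarrow> b \<le> length x \<Longrightarrow> a \<noteq> b \<Longrightarrow> x ! (a - 1) \<noteq> x ! (b - 1)"
  by (simp add: nth_eq_iff_index_eq)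

lemma app_untouched:
  "rng k (length x) qs \<Longrightarrow> p < length x \<Longrightarrow> (\<forall>(a, b) \<in> set qs. p \<noteq> a - 1 \<and> p \<noteq> b - 1) \<Longrightarrow> app x qs ! p = x ! p"
  by (induction x qs rule: app.induct) (auto simp: swap_nth)

lemma app_untouched2:
  assumes "rng k (length x) qs" "k < p" "p \<le> length x" "p \<notin> snd ` set qs"
  shows "app x qs ! (p - 1) = x ! (p - 1)"
proof (rule app_untouched[OF assms(1)])
  show "p - 1 < length x" using assms by simp
  show "\<forall>(a, b)\<in>set qs. p - 1 \<noteq> a - 1 \<and> p - 1 \<noteq> b - 1"
    using assms(1,2,4) unfolding rng_def by force
qed

lemma sorted_gt_Cons: "sorted_wrt (>) (map snd ((a, b) # qs)) \<Longrightarrow> (a', b') \<in> set qs \<Longrightarrow> b' < b"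
  by force

lemma app_hd:
  assumes "rng k (length x) ((a, b) # qs)" "sorted_wrt (>) (map snd ((a, b) # qs))"
  shows "app x ((a, b) # qs) ! (b - 1) = x ! (a - 1)"
proof -
  have "app (swap x a b) qs ! (b - 1) = swap x a b ! (b - 1)"
  proof (rule app_untouched2)
    show "rng k (length (swap x a b)) qs" using assms by simp
    show "k < b" "b \<le> length (swap x a b)" using assms by auto
    show "b \<notin> snd ` set qs" using assms(2) by force
  qed
  also have "\<dots> = x ! (a - 1)" using assms by (intro swap_nth_j) auto
  finally show ?thesis by simp
qed

lemma Q_step:
  assumes Q: "Qk k (swap x a b)" and d: "distinct x" and r: "1 \<le> a" "a \<le> k" "k < b" "b \<le> length x"
    and c: "ninv (swap x a b) = ninv x + 1"
  shows "Qk k x"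
  unfolding Qk_def
proof (intro allI impI)
  fix p q assume pq: "k \<le> p" "p < q" "q < length x"
  have st: "x ! (a - 1) < x ! (b - 1)"
    and nm: "\<And>m. a < m \<Longrightarrow> m < b \<Longrightarrow> \<not> (x ! (a - 1) < x ! (m - 1) \<and> x ! (m - 1) < x ! (b - 1))"
    using upd_step[OF d r(1) _ r(4) c] r by auto
  have x1: "\<And>t. t < length x \<Longrightarrow> t \<noteq> b - 1 \<Longrightarrow> k \<le> t \<Longrightarrow> swap x a b ! t = x ! t"
    using r by (auto simp: swap_nth)
  have x1b: "swap x a b ! (b - 1) = x ! (a - 1)" using r by (auto simp: swap_nth)
  have Q': "\<And>p q. k \<le> p \<Longrightarrow> p < q \<Longrightarrow> q < length x \<Longrightarrow> swap x a b ! q < swap x a b ! p"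
    using Q by (simp add: Qk_def)
  consider "p \<noteq> b - 1" "q \<noteq> b - 1" | "p = b - 1" | "q = b - 1" by blast
  then show "x ! q < x ! p"
  proof cases
    case 1 then show ?thesis using Q'[OF pq] x1[of p] x1[of q] pq by simp
  next
    case 2 then show ?thesis using Q'[OF pq] x1[of q] x1b pq st by simp
  next
    case 3
    have "x ! (a - 1) < x ! p" using Q'[OF pq] x1[of p] x1b pq 3 by simp
    moreover have "\<not> (x ! (a - 1) < x ! p \<and> x ! p < x ! (b - 1))"
      using nm[of "Suc p"] pq 3 r by simp
    moreover have "x ! p \<noteq> x ! (b - 1)" using d pq 3 by (simp add: nth_eq_iff_index_eq)
    ultimately show ?thesis using 3 by auto
  qed
qed

lemma Q_chain: "upd k x qs \<Longrightarrow> distinct x \<Longrightarrow> Qk k (app x qs) \<Longrightarrow> Qk k x"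
proof (induction k x qs rule: upd.induct)
  case (1 k x) then show ?case by simp
next
  case (2 k x a b qs)
  have "Qk k (swap x a b)" using 2 by (simp add: swap_distinct)
  then show ?case using Q_step 2 by auto
qed

lemma L1: "upd k x qs \<Longrightarrow> distinct x \<Longrightarrow> Qk k (app x qs) \<Longrightarrow> sorted_wrt (>) (map snd qs) \<Longrightarrow> sorted_wrt (<) (mu x qs)"
proof (induction k x qs rule: upd.induct)
  case (1 k x) then show ?case by simp
next
  case (2 k x a b qs)
  define x1 where "x1 = swap x a b"
  have d1: "distinct x1" using 2 by (simp add: x1_def swap_distinct)
  have IH: "sorted_wrt (<) (mu x1 qs)" using 2 d1 by (simp add: x1_def)
  show ?case
  proof (cases qs)
    case Nil then show ?thesis by simp
  next
    case (Cons q r)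
    obtain a' b' where q: "q = (a', b')" by force
    have rg: "rng k (length x) ((a, b) # qs)" using upd_rng[OF 2(2)] .
    have e1: "app x ((a, b) # qs) ! (b - 1) = x ! (a - 1)" using app_hd[OF rg] 2 by blast
    have rg1: "rng k (length x1) ((a', b') # r)" using rg Cons q by (simp add: x1_def)
    have e2: "app x1 ((a', b') # r) ! (b' - 1) = x1 ! (a' - 1)"
      using app_hd[OF rg1] 2(5) Cons q by simp
    have bb: "b' < b" using 2(5) Cons q by simp
    have Qy: "Qk k (app x1 qs)" using 2(4) by (simp add: x1_def)
    have "k \<le> b' - 1" "b' - 1 < b - 1" "b - 1 < length (app x1 qs)" using bb rg Cons q by (auto simp: x1_def)
    then have "app x1 qs ! (b - 1) < app x1 qs ! (b' - 1)"
      using Qy unfolding Qk_def by blast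
    then have "x ! (a - 1) < x1 ! (a' - 1)" using e1 e2 Cons q by (simp add: x1_def)
    then show ?thesis using IH Cons q
      by (simp add: x1_def) (meson less_trans)
  qed
qed



lemma L2: "upd k x qs \<Longrightarrow> distinct x \<Longrightarrow> Qk k (app x qs) \<Longrightarrow> sorted_wrt (<) (mu x qs) \<Longrightarrow>
  sorted_wrt (>) (map snd qs) \<and> (\<forall>p\<in>snd ` set qs. hd (mu x qs) < x ! (p - 1))"
proof (induction k x qs rule: upd.induct)
  case (1 k x) then show ?case by simp
next
  case (2 k x a b qs)
  define x1 where "x1 = swap x a b"
  have d1: "distinct x1" using 2 by (simp add: x1_def swap_distinct)
  have r: "1 \<le> a" "a \<le> k" "k < b" "b \<le> length x" and c: "ninv x1 = ninv x + 1" and u1: "upd k x1 qs"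
    using 2(2) by (auto simp: x1_def)
  have st: "x ! (a - 1) < x ! (b - 1)" using upd_step[OF 2(3) r(1) _ r(4)] c r by (simp add: x1_def)
  have x1b: "x1 ! (b - 1) = x ! (a - 1)" unfolding x1_def by (rule swap_nth_j) (use r in auto)
  have x1o: "\<And>p. k < p \<Longrightarrow> p \<le> length x \<Longrightarrow> p \<noteq> b \<Longrightarrow> x1 ! (p - 1) = x ! (p - 1)"
    using r by (auto simp: x1_def swap_nth)
  have Qy: "Qk k (app x1 qs)" using 2(4) by (simp add: x1_def)
  have smu: "sorted_wrt (<) (mu x1 qs)" and smu2: "\<forall>m\<in>set (mu x1 qs). x ! (a - 1) < m"
    using 2(5) by (auto simp: x1_def)
  have IH: "sorted_wrt (>) (map snd qs) \<and> (\<forall>p\<in>snd ` set qs. hd (mu x1 qs) < x1 ! (p - 1))"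
    using 2(1)[OF _ d1[unfolded x1_def]] 2 u1 smu Qy r by (simp add: x1_def)
  have rg1: "rng k (length x1) qs" using upd_rng[OF u1] .
  show ?case
  proof (cases qs)
    case Nil then show ?thesis using st by simp
  next
    case (Cons q rr)
    obtain a' b' where q: "q = (a', b')" by force
    define M where "M = x1 ! (a' - 1)"
    have hm: "hd (mu x1 qs) = M" using Cons q by (simp add: M_def)
    have lt: "x ! (a - 1) < M" using smu2 Cons q by (simp add: M_def)
    have bn: "b \<notin> snd ` set qs"
    proof
      assume "b \<in> snd ` set qs"
      then have "M < x1 ! (b - 1)" using IH hm by auto
      then show False using x1b lt by simp
    qed
    have yb: "app x1 qs ! (b - 1) = x1 ! (b - 1)"
      using app_untouched2[OF rg1 r(3) _ bn] r by (simp add: x1_def)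
    have yb': "app x1 qs ! (b' - 1) = M"
      using app_hd[of k x1 a' b' rr] rg1 IH Cons q by (simp add: M_def)
    have r': "k < b'" "b' \<le> length x" using rg1 Cons q by (auto simp: x1_def)
    have bb: "b' < b"
    proof (rule ccontr)
      assume "\<not> b' < b"
      moreover have "b' \<noteq> b" using bn Cons q by auto
      ultimately have "b < b'" by simp
      then have "app x1 qs ! (b' - 1) < app x1 qs ! (b - 1)"
        using Qy r r' unfolding Qk_def by (simp add: x1_def)
      then show False using yb yb' x1b lt by simp
    qed
    have s1: "sorted_wrt (>) (map snd ((a, b) # qs))"
      using IH bb Cons q by (auto dest: sorted_gt_Cons)
    have s2: "\<forall>p\<in>snd ` set ((a, b) # qs). hd (mu x ((a, b) # qs)) < x ! (p - 1)"
    proof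
      fix p assume p: "p \<in> snd ` set ((a, b) # qs)"
      show "hd (mu x ((a, b) # qs)) < x ! (p - 1)"
      proof (cases "p = b")
        case True then show ?thesis using st by simp
      next
        case False
        then have pq: "p \<in> snd ` set qs" using p by simp
        then have "k < p" "p \<le> length x" using rg1 unfolding rng_def by (auto simp: x1_def)
        then have "x ! (p - 1) = x1 ! (p - 1)" using x1o False by simp
        then show ?thesis using IH hm pq lt by force
      qed
    qed
    show ?thesis using s1 s2 by blast
  qed
qed

lemma uniq: "distinct x \<Longrightarrow> rng k (length x) qs \<Longrightarrow> rng k (length x) qs' \<Longrightarrow>
  sorted_wrt (>) (map snd qs) \<Longrightarrow> sorted_wrt (>) (map snd qs') \<Longrightarrow> app x qs = app x qs' \<Longrightarrow> qs = qs'"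
proof (induction qs arbitrary: x qs')
  have ne: "\<And>x a b rr. distinct x \<Longrightarrow> rng k (length x) ((a, b) # rr) \<Longrightarrow> sorted_wrt (>) (map snd ((a, b) # rr))
     \<Longrightarrow> app x ((a, b) # rr) \<noteq> x"
  proof
    fix x a b rr assume h: "distinct x" "rng k (length x) ((a, b) # rr)" "sorted_wrt (>) (map snd ((a, b) # rr))"
      "app x ((a, b) # rr) = x"
    have "app x ((a, b) # rr) ! (b - 1) = x ! (a - 1)" using app_hd h by blast
    moreover have "x ! (a - 1) \<noteq> x ! (b - 1)" using h(1,2) by (intro nth_neq) auto
    ultimately show False using h(4) by simp
  qed
  {
    case Nil
    show ?case
    proof (cases qs')
      case (Cons q rr)
      obtain a b where "q = (a, b)" by force
      then show ?thesis using ne[of x a b rr] Nil Cons by simp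
    qed simp
  next
    case (Cons q rr)
    obtain a b where q: "q = (a, b)" by force
    show ?case
    proof (cases qs')
      case Nil
      then show ?thesis using ne[of x a b rr] Cons q by simp
    next
      case (Cons q' rr')
      obtain a' b' where q': "q' = (a', b')" by force
      note h = Cons.prems[unfolded q q' Cons]
      have e1: "app x ((a, b) # rr) ! (b - 1) = x ! (a - 1)" using app_hd h by blast
      have e2: "app x ((a', b') # rr') ! (b' - 1) = x ! (a' - 1)" using app_hd h by blast
      have bb: "b = b'"
      proof (rule ccontr)
        assume "b \<noteq> b'"
        then consider "b < b'" | "b' < b" by linarith
        then show False
        proof cases
          case 1
          have "b' \<notin> snd ` set ((a, b) # rr)" using 1 h(4) by auto
          then have "app x ((a, b) # rr) ! (b' - 1) = x ! (b' - 1)"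
            using app_untouched2[OF h(2)] h(3) by auto
          moreover have "x ! (a' - 1) \<noteq> x ! (b' - 1)" using h(1,3) by (intro nth_neq) auto
          ultimately show False using e2 h(6) by simp
        next
          case 2
          have "b \<notin> snd ` set ((a', b') # rr')" using 2 h(5) by auto
          then have "app x ((a', b') # rr') ! (b - 1) = x ! (b - 1)"
            using app_untouched2[OF h(3)] h(2) by auto
          moreover have "x ! (a - 1) \<noteq> x ! (b - 1)" using h(1,2) by (intro nth_neq) auto
          ultimately show False using e1 h(6) by simp
        qed
      qed
      have aa: "a = a'"
      proof -
        have "x ! (a - 1) = x ! (a' - 1)" using e1 e2 bb h(6) by simp
        then show ?thesis using h(1,2,3) nth_neq[of x a a'] by auto
      qed
      have "rr = rr'"
        using Cons.IH[of "swap x a b" rr'] h aa bb by (simp add: swap_distinct)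
      then show ?thesis using q q' Cons aa bb by simp
    qed
  }
qed



fun states :: "nat list \<Rightarrow> (nat \<times> nat) list \<Rightarrow> nat list list" where
  "states x [] = [x]"
| "states x ((a, b) # qs) = x # states (swap x a b) qs"

lemma states_ne[simp]: "states x qs \<noteq> []"
  by (cases qs) auto

lemma hd_states[simp]: "hd (states x qs) = x"
  by (cases "(x, qs)" rule: states.cases) auto

lemma last_states[simp]: "last (states x qs) = app x qs"
  by (induction x qs rule: states.induct) auto

lemma trans_pos_swap:
  assumes "distinct x" "1 \<le> a" "a < b" "b \<le> length x"
  shows "trans_pos x (swap x a b) = (a, b)"
  unfolding trans_pos_def
proof (rule the_equality)
  show "case (a, b) of (i, j) \<Rightarrow> 1 \<le> i \<and> i < j \<and> j \<le> length x \<and> swap x a b = swap x i j"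
    using assms by simp
  fix p assume "case p of (i, j) \<Rightarrow> 1 \<le> i \<and> i < j \<and> j \<le> length x \<and> swap x a b = swap x i j"
  then show "p = (a, b)" using swap_inj[OF assms(1-4)] by (cases p) auto
qed

lemma exch_min_swap:
  assumes "distinct x" "1 \<le> a" "a < b" "b \<le> length x"
  shows "exch_min x (swap x a b) = min (x ! (a - 1)) (x ! (b - 1))"
  using trans_pos_swap[OF assms] by (simp add: exch_min_def)

lemma chain_pairs_Cons: "chain_pairs (x # y # zs) = trans_pos x y # chain_pairs (y # zs)"
proof -
  have "[0..<length (x # y # zs) - 1] = 0 # map Suc [0..<length (y # zs) - 1]"
    by (simp add: upt_conv_Cons map_Suc_upt del: upt_Suc)
  then show ?thesis unfolding chain_pairs_def by simp
qed

lemma chain_pairs_single: "chain_pairs [x] = []"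
  by (simp add: chain_pairs_def)

lemma chain_pairs_states: "upd k x qs \<Longrightarrow> distinct x \<Longrightarrow> chain_pairs (states x qs) = qs"
proof (induction k x qs rule: upd.induct)
  case (1 k x) then show ?case by (simp add: chain_pairs_single)
next
  case (2 k x a b qs)
  have d1: "distinct (swap x a b)" using 2 by (simp add: swap_distinct)
  obtain zs where z: "states (swap x a b) qs = swap x a b # zs"
    by (cases qs) auto
  have "trans_pos x (swap x a b) = (a, b)" using 2 by (intro trans_pos_swap) auto
  then show ?case using 2 d1 z by (simp add: chain_pairs_Cons)
qed

lemma kchain_Cons: "kchain k (x # y # zs) \<longleftrightarrow> kcover k x y \<and> kchain k (y # zs)"
  unfolding kchain_def
proof safe
  fix i assume h: "\<forall>i. Suc i < length (x # y # zs) \<longrightarrow> kcover k ((x # y # zs) ! i) ((x # y # zs) ! Suc i)"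
    "Suc i < length (y # zs)"
  show "kcover k ((y # zs) ! i) ((y # zs) ! Suc i)" using h(1)[rule_format, of "Suc i"] h(2) by simp
next
  assume "\<forall>i. Suc i < length (x # y # zs) \<longrightarrow> kcover k ((x # y # zs) ! i) ((x # y # zs) ! Suc i)"
  then show "kcover k x y" by (metis length_Cons nth_Cons_0 nth_Cons_Suc zero_less_Suc Suc_less_eq)
next
  fix i assume h: "kcover k x y" "\<forall>i. Suc i < length (y # zs) \<longrightarrow> kcover k ((y # zs) ! i) ((y # zs) ! Suc i)"
    "Suc i < length (x # y # zs)"
  show "kcover k ((x # y # zs) ! i) ((x # y # zs) ! Suc i)"
    using h by (cases i) auto
qed

lemma incr_Cons: "incr_kchain k (x # y # zs) \<longleftrightarrow> kcover k x y \<and> incr_kchain k (y # zs) \<and>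
   (zs \<noteq> [] \<longrightarrow> exch_min x y < exch_min y (hd zs))"
proof -
  let ?E = "\<lambda>xs i. exch_min (xs ! i) (xs ! (i + 1)) < exch_min (xs ! (i + 1)) (xs ! (i + 2))"
  have "(\<forall>i. i + 2 < length (x # y # zs) \<longrightarrow> ?E (x # y # zs) i) \<longleftrightarrow>
        (\<forall>i. i + 2 < length (y # zs) \<longrightarrow> ?E (y # zs) i) \<and> (zs \<noteq> [] \<longrightarrow> exch_min x y < exch_min y (hd zs))"
  proof (intro iffI conjI allI impI)
    fix i assume h: "\<forall>i. i + 2 < length (x # y # zs) \<longrightarrow> ?E (x # y # zs) i" "i + 2 < length (y # zs)"
    show "?E (y # zs) i" using h(1)[rule_format, of "Suc i"] h(2) by simp
  next
    assume h: "\<forall>i. i + 2 < length (x # y # zs) \<longrightarrow> ?E (x # y # zs) i" "zs \<noteq> []"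
    then show "exch_min x y < exch_min y (hd zs)"
      using h(1)[rule_format, of 0] by (cases zs) auto
  next
    fix i assume h: "(\<forall>i. i + 2 < length (y # zs) \<longrightarrow> ?E (y # zs) i) \<and> (zs \<noteq> [] \<longrightarrow> exch_min x y < exch_min y (hd zs))"
      "i + 2 < length (x # y # zs)"
    show "?E (x # y # zs) i"
    proof (cases i)
      case 0 then show ?thesis using h by (cases zs) auto
    next
      case (Suc j) then show ?thesis using h(1) h(2) by simp
    qed
  qed
  then show ?thesis unfolding incr_kchain_def kchain_Cons by blast
qed

lemma incr_single: "incr_kchain k [x]"
  by (simp add: incr_kchain_def kchain_def)

lemma incr_states: "upd k x qs \<Longrightarrow> distinct x \<Longrightarrow> incr_kchain k (states x qs) \<longleftrightarrow> sorted_wrt (<) (mu x qs)"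
proof (induction k x qs rule: upd.induct)
  case (1 k x) then show ?case by (simp add: incr_single)
next
  case (2 k x a b qs)
  define x1 where "x1 = swap x a b"
  have d1: "distinct x1" using 2 by (simp add: x1_def swap_distinct)
  have r: "1 \<le> a" "a \<le> k" "k < b" "b \<le> length x" and c: "ninv x1 = ninv x + 1" and u1: "upd k x1 qs"
    using 2(2) by (auto simp: x1_def)
  have st: "x ! (a - 1) < x ! (b - 1)" using upd_step[OF 2(3) r(1) _ r(4)] c r by (simp add: x1_def)
  have kc: "kcover k x x1" unfolding kcover_def x1_def using r c x1_def by blast
  have em: "exch_min x x1 = x ! (a - 1)" using exch_min_swap[OF 2(3) r(1) _ r(4)] r st by (simp add: x1_def)
  have IH: "incr_kchain k (states x1 qs) \<longleftrightarrow> sorted_wrt (<) (mu x1 qs)" using 2 d1 u1 by (simp add: x1_def)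
  show ?case
  proof (cases qs)
    case Nil then show ?thesis using kc by (simp add: x1_def incr_Cons incr_single)
  next
    case (Cons q rr)
    obtain a' b' where q: "q = (a', b')" by force
    have r': "1 \<le> a'" "a' \<le> k" "k < b'" "b' \<le> length x1" using u1 Cons q by auto
    have st': "x1 ! (a' - 1) < x1 ! (b' - 1)" using upd_step[OF d1 r'(1) _ r'(4)] u1 Cons q r' by auto
    have em': "exch_min x1 (swap x1 a' b') = x1 ! (a' - 1)" using exch_min_swap[OF d1 r'(1) _ r'(4)] r' st' by simp
    obtain zs where z: "states (swap x1 a' b') rr = swap x1 a' b' # zs" by (cases rr) auto
    have "incr_kchain k (states x ((a, b) # qs)) \<longleftrightarrow> incr_kchain k (states x1 qs) \<and> x ! (a - 1) < x1 ! (a' - 1)"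
      using kc em em' Cons q z by (simp add: x1_def incr_Cons)
    also have "\<dots> \<longleftrightarrow> sorted_wrt (<) (mu x ((a, b) # qs))"
      using IH Cons q by (auto simp: x1_def sorted_wrt2[OF transp_lt] intro: less_trans)
    finally show ?thesis .
  qed
qed

lemma kchain_states: "kchain k xs \<Longrightarrow> \<exists>qs. xs = states (hd xs) qs \<and> upd k (hd xs) qs"
proof (induction xs)
  case Nil then show ?case by (simp add: kchain_def)
next
  case (Cons x xs)
  show ?case
  proof (cases xs)
    case Nil then show ?thesis by (intro exI[of _ "[]"]) simp
  next
    case (Cons y zs)
    have kc: "kcover k x y" and kr: "kchain k xs" using Cons.prems Cons by (auto simp: kchain_Cons)
    obtain qs where qs: "xs = states y qs" "upd k y qs" using Cons.IH kr Cons by auto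
    obtain i j where ij: "1 \<le> i" "i \<le> k" "k < j" "j \<le> length x" "y = swap x i j" "ninv y = ninv x + 1"
      using kc unfolding kcover_def by blast
    show ?thesis using qs ij Cons by (intro exI[of _ "(i, j) # qs"]) auto
  qed
qed



lemma perms_len: "y \<in> perms n \<Longrightarrow> length y = n"
  unfolding perms_def using distinct_card by fastforce

lemma row_chain:
  assumes inc: "incr_kchain_from k x y xs" and yp: "y \<in> perms n" and Qy: "Qk k y"
  shows "x \<in> perms n \<and> Qk k x \<and> (\<exists>qs. xs = states x qs \<and> upd k x qs \<and> sorted_wrt (>) (map snd qs) \<and> app x qs = y)"
proof -
  have kc: "kchain k xs" and hx: "hd xs = x" and ly: "last xs = y" and ic: "incr_kchain k xs"
    using inc by (auto simp: incr_kchain_from_def incr_kchain_def)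
  obtain qs where qs: "xs = states x qs" "upd k x qs" using kchain_states[OF kc] hx by auto
  have ay: "app x qs = y" using qs ly by simp
  have rg: "rng k (length x) qs" using upd_rng[OF qs(2)] .
  have xr: "app y (rev qs) = x" using app_rev[OF rg] ay by simp
  have rg': "rng k (length y) (rev qs)" using rg by (simp add: ay[symmetric])
  have xp: "x \<in> perms n" using app_perm[OF rg'] xr yp by (simp add: perms_def)
  have dx: "distinct x" using xp by (simp add: perms_def)
  have Qx: "Qk k x" using Q_chain[OF qs(2) dx] ay Qy by simp
  have "sorted_wrt (<) (mu x qs)" using incr_states[OF qs(2) dx] ic qs(1) by simp
  then have "sorted_wrt (>) (map snd qs)" using L2[OF qs(2) dx] ay Qy by simp
  then show ?thesis using xp Qx qs ay by blast
qed

lemma row_exists: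
  assumes "upd k x qs" "distinct x" "Qk k (app x qs)" "sorted_wrt (>) (map snd qs)"
  shows "incr_kchain_from k x (app x qs) (states x qs)"
  using incr_states[OF assms(1,2)] L1[OF assms] unfolding incr_kchain_from_def by simp

lemma the_row:
  assumes inc: "incr_kchain_from k x y xs0" and yp: "y \<in> perms n" and Qy: "Qk k y"
  shows "(THE xs. incr_kchain_from k x y xs) = xs0"
proof (rule the_equality)
  show "incr_kchain_from k x y xs0" by fact
  fix xs assume inc': "incr_kchain_from k x y xs"
  obtain qs where qs: "xs0 = states x qs" "upd k x qs" "sorted_wrt (>) (map snd qs)" "app x qs = y"
    and xp: "x \<in> perms n" using row_chain[OF inc yp Qy] by blast
  obtain qs' where qs': "xs = states x qs'" "upd k x qs'" "sorted_wrt (>) (map snd qs')" "app x qs' = y"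
    using row_chain[OF inc' yp Qy] by blast
  have "qs = qs'"
    using uniq[of x k qs qs'] xp qs qs' upd_rng by (simp add: perms_def)
  then show "xs = xs0" using qs qs' by simp
qed

definition rowlist :: "nat \<Rightarrow> tableau \<Rightarrow> nat \<Rightarrow> (nat \<times> nat) list" where
  "rowlist n T i = concat (map (\<lambda>c. case T (i, c) of None \<Rightarrow> [] | Some a \<Rightarrow> [(a, n + 1 - c)]) (rev [1..<n + 1 - i]))"

lemma reading_word_rows: "reading_word n T = concat (map (rowlist n T) [1..<n])"
  unfolding reading_word_def rowlist_def[abs_def] by simp

definition cellf :: "nat \<Rightarrow> tableau \<Rightarrow> nat \<Rightarrow> nat \<Rightarrow> (nat \<times> nat) list" where
  "cellf n T k b = (case T (k, n + 1 - b) of None \<Rightarrow> [] | Some a \<Rightarrow> [(a, b)])"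

lemma rev_upt_map: "rev [1..<n + 1 - k] = map (\<lambda>b. n + 1 - b) [k + 1..<n + 1]"
  by (rule nth_equalityI) (auto simp del: upt_Suc simp add: rev_nth nth_upt)

lemma rowlist_alt: "rowlist n T k = concat (map (cellf n T k) [k + 1..<n + 1])"
proof -
  have "rowlist n T k = concat (map ((\<lambda>c. case T (k, c) of None \<Rightarrow> [] | Some a \<Rightarrow> [(a, n + 1 - c)]) \<circ> (\<lambda>b. n + 1 - b)) [k + 1..<n + 1])"
    unfolding rowlist_def rev_upt_map map_map ..
  also have "\<dots> = concat (map (cellf n T k) [k + 1..<n + 1])"
    by (rule arg_cong[where f = concat], rule map_cong) (auto simp: cellf_def split: option.splits)
  finally show ?thesis .
qed

lemma concat_sorted:
  assumes "\<And>b. \<forall>p\<in>set (h b). snd p = b" "\<And>b. length (h b) \<le> 1"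
  shows "sorted_wrt (<) (map snd (concat (map h [lo..<hi])))"
proof (induction hi)
  case 0 then show ?case by simp
next
  case (Suc hi)
  show ?case
  proof (cases "lo \<le> hi")
    case True
    have e: "concat (map h [lo..<Suc hi]) = concat (map h [lo..<hi]) @ h hi" using True by simp
    have A: "\<forall>x\<in>set (map snd (concat (map h [lo..<hi]))). x < hi" using assms(1) by fastforce
    have B: "\<forall>y\<in>set (map snd (h hi)). y = hi" using assms(1)[of hi] by auto
    have C: "sorted_wrt (<) (map snd (h hi))"
      using assms(2)[of hi] by (cases "h hi") auto
    show ?thesis unfolding e map_append sorted_wrt_append using Suc.IH A B C by fastforce
  qed (use Suc in simp)
qed

lemma rows_of_list:
  "sorted_wrt (<) (map snd ps) \<Longrightarrow> \<forall>p\<in>set ps. lo \<le> snd p \<and> snd p < hi \<Longrightarrow>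
   concat (map (\<lambda>b. if \<exists>a. (a, b) \<in> set ps then [(THE a. (a, b) \<in> set ps, b)] else []) [lo..<hi]) = ps"
proof (induction ps arbitrary: lo)
  case Nil then show ?case by simp
next
  case (Cons p r)
  obtain a b where p: "p = (a, b)" by force
  have lb: "lo \<le> b" "b < hi" using Cons.prems p by auto
  have rb: "\<forall>q\<in>set r. b < snd q" using Cons.prems(1) p by auto
  let ?G = "\<lambda>ps b. if \<exists>a. (a, b) \<in> set ps then [(THE a. (a, b) \<in> set ps, b)] else []"
  have U: "[lo..<hi] = [lo..<b] @ b # [Suc b..<hi]"
  proof -
    have "[lo..<hi] = [lo..<b] @ [b..<hi]" using upt_add_eq_append[of lo b "hi - b"] lb by simp
    also have "[b..<hi] = b # [Suc b..<hi]" using lb by (simp add: upt_conv_Cons)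
    finally show ?thesis .
  qed
  have G1: "concat (map (?G (p # r)) [lo..<b]) = []"
  proof -
    have "map (?G (p # r)) [lo..<b] = map (\<lambda>_. []) [lo..<b]"
    proof (rule map_cong)
      fix b' assume "b' \<in> set [lo..<b]"
      then have bl: "b' < b" by simp
      have "\<not> (\<exists>a'. (a', b') \<in> set (p # r))"
      proof
        assume "\<exists>a'. (a', b') \<in> set (p # r)"
        then obtain a' where "(a', b') \<in> set (p # r)" by blast
        then show False using bl rb p by (auto dest: bspec)
      qed
      then show "?G (p # r) b' = []" by (simp only: if_False)
    qed simp
    then show ?thesis by simp
  qed
  have G2: "?G (p # r) b = [(a, b)]"
  proof -
    have "(THE a'. (a', b) \<in> set (p # r)) = a"
    proof (rule the_equality)
      show "(a, b) \<in> set (p # r)" using p by simp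
      fix a' assume "(a', b) \<in> set (p # r)"
      then show "a' = a" using rb p by (auto dest: bspec)
    qed
    moreover have "\<exists>a'. (a', b) \<in> set (p # r)" using p by auto
    ultimately show ?thesis by (simp only: if_True)
  qed
  have G3: "map (?G (p # r)) [Suc b..<hi] = map (?G r) [Suc b..<hi]"
  proof (rule map_cong)
    fix b' assume "b' \<in> set [Suc b..<hi]"
    then have "b' \<noteq> b" by simp
    then have "set (p # r) \<inter> {q. snd q = b'} = set r \<inter> {q. snd q = b'}" using p by auto
    then have "(\<lambda>a'. (a', b') \<in> set (p # r)) = (\<lambda>a'. (a', b') \<in> set r)" by (auto simp: set_eq_iff fun_eq_iff)
    then show "?G (p # r) b' = ?G r b'" by simp
  qed simp
  have G4: "concat (map (?G r) [Suc b..<hi]) = r"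
    using Cons.IH[of "Suc b"] Cons.prems rb by (simp add: Suc_le_eq)
  have "concat (map (?G (p # r)) [lo..<hi]) = concat (map (?G (p # r)) [lo..<b]) @ ?G (p # r) b @ concat (map (?G (p # r)) [Suc b..<hi])"
    unfolding U by simp
  also have "\<dots> = p # r" unfolding G1 G2 G3 G4 using p by simp
  finally show ?case .
qed



fun dvr :: "nat list \<Rightarrow> (nat \<times> nat) list \<Rightarrow> bool" where
  "dvr y [] = True"
| "dvr y ((a, b) # ps) = (cover (swap y a b) y \<and> dvr (swap y a b) ps)"

lemma dvr_append: "dvr y (ps @ qs) \<longleftrightarrow> dvr y ps \<and> dvr (app y ps) qs"
  by (induction y ps rule: dvr.induct) auto

lemma ball_Suc1: "(\<forall>s\<in>{1..Suc L}. P s) \<longleftrightarrow> P 1 \<and> (\<forall>s'\<in>{1..L}. P (Suc s'))"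
proof
  assume h: "\<forall>s\<in>{1..Suc L}. P s" then show "P 1 \<and> (\<forall>s'\<in>{1..L}. P (Suc s'))" by auto
next
  assume h: "P 1 \<and> (\<forall>s'\<in>{1..L}. P (Suc s'))"
  show "\<forall>s\<in>{1..Suc L}. P s"
  proof
    fix s assume s: "s \<in> {1..Suc L}"
    show "P s"
    proof (cases "s = 1")
      case True then show ?thesis using h by simp
    next
      case False
      then obtain s' where "s = Suc s'" "1 \<le> s'" "s' \<le> L" using s by (cases s) auto
      then show ?thesis using h by auto
    qed
  qed
qed

lemma assoc_dvr: "(\<forall>s\<in>{1..length ps}. cover (app y (take s ps)) (app y (take (s - 1) ps))) \<longleftrightarrow> dvr y ps"
proof (induction ps arbitrary: y)
  case Nil then show ?case by simp
next
  case (Cons p r)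
  obtain a b where p: "p = (a, b)" by force
  have e: "\<And>s'. 1 \<le> s' \<Longrightarrow> cover (app y (take (Suc s') (p # r))) (app y (take (Suc s' - 1) (p # r))) =
     cover (app (swap y a b) (take s' r)) (app (swap y a b) (take (s' - 1) r))"
  proof -
    fix s' :: nat assume "1 \<le> s'"
    then obtain s'' where s'': "s' = Suc s''" by (cases s') auto
    show "?thesis s'" using p s'' by simp
  qed
  have s1: "(\<forall>s\<in>{1..length (p # r)}. cover (app y (take s (p # r))) (app y (take (s - 1) (p # r)))) \<longleftrightarrow>
     cover (app y (take 1 (p # r))) (app y (take (1 - 1) (p # r))) \<and> (\<forall>s'\<in>{1..length r}. cover (app y (take (Suc s') (p # r))) (app y (take (Suc s' - 1) (p # r))))"
    by (simp only: length_Cons ball_Suc1[where P = "\<lambda>s. cover (app y (take s (p # r))) (app y (take (s - 1) (p # r)))"])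
  have s2: "cover (app y (take 1 (p # r))) (app y (take (1 - 1) (p # r))) \<longleftrightarrow> cover (swap y a b) y"
    using p by simp
  have s3: "(\<forall>s'\<in>{1..length r}. cover (app y (take (Suc s') (p # r))) (app y (take (Suc s' - 1) (p # r)))) \<longleftrightarrow>
     (\<forall>s'\<in>{1..length r}. cover (app (swap y a b) (take s' r)) (app (swap y a b) (take (s' - 1) r)))"
  proof (intro ball_cong refl)
    fix s' assume "s' \<in> {1..length r}"
    then show "cover (app y (take (Suc s') (p # r))) (app y (take (Suc s' - 1) (p # r))) =
     cover (app (swap y a b) (take s' r)) (app (swap y a b) (take (s' - 1) r))" by (intro e) simp
  qed
  have s4: "dvr y (p # r) \<longleftrightarrow> cover (swap y a b) y \<and> dvr (swap y a b) r" using p by simp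
  show ?case using s1 s2 s3 s4 Cons.IH[of "swap y a b"] by blast
qed

lemma upd_dvr: "rng k (length y) ps \<Longrightarrow> dvr y ps \<longleftrightarrow> upd k (app y ps) (rev ps)"
proof (induction y ps rule: dvr.induct)
  case (1 y) then show ?case by simp
next
  case (2 y a b ps)
  define y1 where "y1 = swap y a b"
  have r: "1 \<le> a" "a \<le> k" "k < b" "b \<le> length y" and rg: "rng k (length y1) ps"
    using 2(2) by (auto simp: y1_def)
  have IH: "dvr y1 ps \<longleftrightarrow> upd k (app y1 ps) (rev ps)" using 2(1) rg by (simp add: y1_def)
  have inv: "swap y1 a b = y" using r by (simp add: y1_def swap_invol)
  have ar: "app (app y1 ps) (rev ps) = y1" using app_rev[OF rg] .
  have cv: "cover y1 y \<longleftrightarrow> ninv y = ninv y1 + 1"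
  proof
    assume "cover y1 y" then show "ninv y = ninv y1 + 1" by (auto simp: cover_def)
  next
    assume "ninv y = ninv y1 + 1"
    then show "cover y1 y" unfolding cover_def using r inv by (intro exI[of _ a] exI[of _ b]) (auto simp: y1_def)
  qed
  have ay: "app y ((a, b) # ps) = app y1 ps" by (simp add: y1_def)
  have "upd k (app y ((a, b) # ps)) (rev ((a, b) # ps)) \<longleftrightarrow> upd k (app y1 ps) (rev ps) \<and> upd k y1 [(a, b)]"
    unfolding ay by (simp add: upd_append ar)
  also have "upd k y1 [(a, b)] \<longleftrightarrow> ninv y = ninv y1 + 1" using r inv by (simp add: y1_def)
  finally have "upd k (app y ((a, b) # ps)) (rev ((a, b) # ps)) \<longleftrightarrow> upd k (app y1 ps) (rev ps) \<and> ninv y = ninv y1 + 1" .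
  moreover have "dvr y ((a, b) # ps) \<longleftrightarrow> cover y1 y \<and> dvr y1 ps" by (simp add: y1_def)
  ultimately show ?case using IH cv by blast
qed

lemma associated_dvr: "associated n T w \<longleftrightarrow> dvr (w0 n) (reading_word n T) \<and> app (w0 n) (reading_word n T) = w"
  unfolding associated_def Let_def app_foldl assoc_dvr by simp

lemma Qk_mono: "Qk k y \<Longrightarrow> k \<le> k' \<Longrightarrow> Qk k' y"
  unfolding Qk_def by auto

lemma w0_nth: "p < n \<Longrightarrow> w0 n ! p = n - p"
  by (simp add: w0_def rev_nth nth_upt del: upt_Suc)

lemma w0_len[simp]: "length (w0 n) = n" by (simp add: w0_def)

lemma w0_Q: "Qk 0 (w0 n)"
  unfolding Qk_def by (auto simp: w0_nth)

lemma w0_perm: "w0 n \<in> perms n"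
  by (auto simp: w0_def perms_def)

lemma the_snd: "(a, b) \<in> set qs \<Longrightarrow> distinct (map snd qs) \<Longrightarrow> (THE a'. (a', b) \<in> set qs) = a"
proof (rule the_equality)
  fix a' assume h: "(a', b) \<in> set qs" "(a, b) \<in> set qs" "distinct (map snd qs)"
  then have "inj_on snd (set qs)" by (simp add: distinct_map)
  then show "a' = a" using h by (metis inj_onD prod.inject snd_conv)
qed

lemma sorted_gt_distinct0: "sorted_wrt (>) (xs :: nat list) \<Longrightarrow> distinct xs"
  by (induction xs) auto

lemma sorted_lt_distinct0: "sorted_wrt (<) (xs :: nat list) \<Longrightarrow> distinct xs"
  by (induction xs) auto



lemma rowlist_mem:
  "(a, b) \<in> set (rowlist n T k) \<longleftrightarrow> k < b \<and> b \<le> n \<and> T (k, n + 1 - b) = Some a"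
  unfolding rowlist_alt by (auto simp: cellf_def split: option.splits)

lemma rowlist_props:
  assumes "flagged n T"
  shows "rng k n (rowlist n T k) \<and> sorted_wrt (<) (map snd (rowlist n T k))"
proof
  show "rng k n (rowlist n T k)"
    unfolding rng_def
  proof (intro ballI, clarify)
    fix a b assume "(a, b) \<in> set (rowlist n T k)"
    then have h: "k < b" "b \<le> n" "T (k, n + 1 - b) = Some a" by (auto simp: rowlist_mem)
    then show "1 \<le> a \<and> a \<le> k \<and> k < b \<and> b \<le> n" using assms unfolding flagged_def by blast
  qed
  show "sorted_wrt (<) (map snd (rowlist n T k))"
    unfolding rowlist_alt by (rule concat_sorted) (auto simp: cellf_def split: option.splits)
qed

lemma Psi_in:
  assumes "1 \<le> k" "k < n" "1 \<le> c" "k + c \<le> n"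
    and "(THE xs. incr_kchain_from k (C ! (n - 1 - k)) (C ! (n - k)) xs) = states x qs" "upd k x qs" "distinct x"
  shows "Psi n C (k, c) = (if \<exists>a. (a, n + 1 - c) \<in> set qs then Some (THE a. (a, n + 1 - c) \<in> set qs) else None)"
  using assms by (simp add: Psi_def Let_def chain_pairs_states)

lemma Psi_out: "\<not> (1 \<le> k \<and> k < n \<and> 1 \<le> c \<and> k + c \<le> n) \<Longrightarrow> Psi n C (k, c) = None"
  by (auto simp: Psi_def Let_def)

lemma rev_upt_nth: "s < n - 1 \<Longrightarrow> rev [1..<n] ! s = n - 1 - s"
  by (simp add: rev_nth nth_upt del: upt_Suc)

lemma compat_at:
  assumes C: "C \<in> chains n w" and k: "1 \<le> k" "k \<le> n - 1"
  shows "\<exists>xs. incr_kchain_from k (C ! (n - 1 - k)) (C ! (n - k)) xs"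
proof -
  have cp: "compatible C (rev [1..<n])" using C by (simp add: chains_def)
  define s where "s = n - 1 - k"
  have s: "s < length (rev [1..<n])" using k by (simp add: s_def)
  have "rev [1..<n] ! s = k" using rev_upt_nth[of s n] k by (simp add: s_def)
  moreover have "s + 1 = n - k" using k by (simp add: s_def)
  ultimately show ?thesis using cp s unfolding compatible_def s_def by metis
qed

lemma chain_len: "C \<in> chains n w \<Longrightarrow> length C = n" by (simp add: chains_def)

lemma chain_last: "C \<in> chains n w \<Longrightarrow> 1 \<le> n \<Longrightarrow> C ! (n - 1) = w0 n"
proof -
  assume h: "C \<in> chains n w" "1 \<le> n"
  then have "length C = n" "last C = w0 n" by (auto simp: chains_def)
  moreover from this h(2) have "C \<noteq> []" by auto
  ultimately show ?thesis by (simp add: last_conv_nth)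
qed

lemma chain_hd: "C \<in> chains n w \<Longrightarrow> 1 \<le> n \<Longrightarrow> C ! 0 = w"
proof -
  assume h: "C \<in> chains n w" "1 \<le> n"
  then have "length C = n" "hd C = w" by (auto simp: chains_def)
  moreover from this h(2) have "C \<noteq> []" by auto
  ultimately show ?thesis by (simp add: hd_conv_nth)
qed

lemma chain_inv:
  assumes C: "C \<in> chains n w" and n: "1 \<le> n"
  shows "j \<le> n - 1 \<Longrightarrow> C ! (n - 1 - j) \<in> perms n \<and> Qk (j + 1) (C ! (n - 1 - j))"
proof (induction j)
  case 0
  then show ?case using chain_last[OF C n] w0_perm Qk_mono[OF w0_Q, of 1] by simp
next
  case (Suc j)
  define k where "k = Suc j"
  have k: "1 \<le> k" "k \<le> n - 1" using Suc by (auto simp: k_def)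
  obtain xs where xs: "incr_kchain_from k (C ! (n - 1 - k)) (C ! (n - k)) xs" using compat_at[OF C k] by blast
  have e: "n - k = n - 1 - j" using k by (simp add: k_def)
  have y: "C ! (n - k) \<in> perms n" "Qk k (C ! (n - k))" using Suc e by (auto simp: k_def)
  have "C ! (n - 1 - k) \<in> perms n \<and> Qk k (C ! (n - 1 - k))" using row_chain[OF xs y] by blast
  then show ?case using Qk_mono unfolding k_def by auto
qed

lemma chain_row:
  assumes C: "C \<in> chains n w" and n: "1 \<le> n" and k: "1 \<le> k" "k \<le> n - 1"
  shows "\<exists>qs. (THE xs. incr_kchain_from k (C ! (n - 1 - k)) (C ! (n - k)) xs) = states (C ! (n - 1 - k)) qs \<and>
    upd k (C ! (n - 1 - k)) qs \<and> sorted_wrt (>) (map snd qs) \<and> app (C ! (n - 1 - k)) qs = C ! (n - k) \<and>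
    distinct (C ! (n - 1 - k))"
proof -
  obtain xs where xs: "incr_kchain_from k (C ! (n - 1 - k)) (C ! (n - k)) xs" using compat_at[OF C k] by blast
  have e: "n - 1 - (k - 1) = n - k" "k - 1 + 1 = k" using k by simp_all
  have y: "C ! (n - k) \<in> perms n" "Qk k (C ! (n - k))" using chain_inv[OF C n, of "k - 1"] k unfolding e by auto
  obtain qs where qs: "xs = states (C ! (n - 1 - k)) qs" "upd k (C ! (n - 1 - k)) qs" "sorted_wrt (>) (map snd qs)"
    "app (C ! (n - 1 - k)) qs = C ! (n - k)" and xp: "C ! (n - 1 - k) \<in> perms n"
    using row_chain[OF xs y] by blast
  have th: "(THE xs. incr_kchain_from k (C ! (n - 1 - k)) (C ! (n - k)) xs) = xs" using the_row[OF xs y] .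
  have d: "distinct (C ! (n - 1 - k))" using xp by (simp add: perms_def)
  show ?thesis using qs d unfolding th by blast
qed

lemma Psi_rowlist:
  assumes C: "C \<in> chains n w" and n: "1 \<le> n" and k: "1 \<le> k" "k \<le> n - 1"
    and T: "(THE xs. incr_kchain_from k (C ! (n - 1 - k)) (C ! (n - k)) xs) = states (C ! (n - 1 - k)) qs"
    and u: "upd k (C ! (n - 1 - k)) qs" and s: "sorted_wrt (>) (map snd qs)" and d: "distinct (C ! (n - 1 - k))"
  shows "rowlist n (Psi n C) k = rev qs"
proof -
  have len: "length (C ! (n - 1 - k)) = n"
  proof -
    have "C ! (n - 1 - k) \<in> perms n" using chain_inv[OF C n, of k] k by auto
    then show ?thesis by (rule perms_len)
  qed
  have rg: "rng k n qs" using upd_rng[OF u] len by simp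
  have "rowlist n (Psi n C) k = concat (map (cellf n (Psi n C) k) [k + 1..<n + 1])" by (rule rowlist_alt)
  also have "\<dots> = concat (map (\<lambda>b. if \<exists>a. (a, b) \<in> set (rev qs) then [(THE a. (a, b) \<in> set (rev qs), b)] else []) [k + 1..<n + 1])"
  proof (rule arg_cong[where f = concat], rule map_cong[OF refl])
    fix b assume "b \<in> set [k + 1..<n + 1]"
    then have b: "k < b" "b \<le> n" by auto
    have "Psi n C (k, n + 1 - b) = (if \<exists>a. (a, n + 1 - (n + 1 - b)) \<in> set qs then Some (THE a. (a, n + 1 - (n + 1 - b)) \<in> set qs) else None)"
      using Psi_in[OF k(1) _ _ _ T u d] b k by simp
    moreover have "n + 1 - (n + 1 - b) = b" using b by simp
    ultimately show "cellf n (Psi n C) k b = (if \<exists>a. (a, b) \<in> set (rev qs) then [(THE a. (a, b) \<in> set (rev qs), b)] else [])"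
      by (simp add: cellf_def)
  qed
  also have "\<dots> = rev qs"
  proof (rule rows_of_list)
    show "sorted_wrt (<) (map snd (rev qs))" using s by (simp add: rev_map[symmetric] sorted_wrt_rev)
    show "\<forall>p\<in>set (rev qs). k + 1 \<le> snd p \<and> snd p < n + 1" using rg unfolding rng_def by auto
  qed
  finally show ?thesis .
qed



lemma chain_U:
  assumes C: "C \<in> chains n w" and n: "1 \<le> n"
  shows "j \<le> n - 1 \<Longrightarrow> C ! (n - 1 - j) = app (w0 n) (concat (map (rowlist n (Psi n C)) [1..<j + 1])) \<and>
     dvr (w0 n) (concat (map (rowlist n (Psi n C)) [1..<j + 1]))"
proof (induction j)
  case 0 show ?case using chain_last[OF C n] by simp
next
  case (Suc j)
  define k where "k = Suc j"
  have k: "1 \<le> k" "k \<le> n - 1" using Suc.prems by (auto simp: k_def)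
  obtain qs where qs: "(THE xs. incr_kchain_from k (C ! (n - 1 - k)) (C ! (n - k)) xs) = states (C ! (n - 1 - k)) qs"
    "upd k (C ! (n - 1 - k)) qs" "sorted_wrt (>) (map snd qs)" "app (C ! (n - 1 - k)) qs = C ! (n - k)"
    "distinct (C ! (n - 1 - k))"
    using chain_row[OF C n k] by blast
  have rl: "rowlist n (Psi n C) k = rev qs" using Psi_rowlist[OF C n k qs(1) qs(2) qs(3) qs(5)] .
  have e: "n - 1 - j = n - k" using k by (simp add: k_def)
  let ?A = "concat (map (rowlist n (Psi n C)) [1..<j + 1])"
  have IH: "C ! (n - k) = app (w0 n) ?A" "dvr (w0 n) ?A" using Suc e by auto
  have sp: "concat (map (rowlist n (Psi n C)) [1..<Suc j + 1]) = ?A @ rev qs" using rl by (simp add: k_def)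
  have rg: "rng k (length (C ! (n - 1 - k))) qs" using upd_rng[OF qs(2)] .
  have bk: "app (C ! (n - k)) (rev qs) = C ! (n - 1 - k)" using app_rev[OF rg] qs(4) by simp
  have rg2: "rng k (length (C ! (n - k))) (rev qs)" using rg qs(4)[symmetric] by simp
  have dv: "dvr (C ! (n - k)) (rev qs)" using upd_dvr[OF rg2] bk qs(2) by simp
  have e2: "n - 1 - Suc j = n - 1 - k" by (simp add: k_def)
  have "C ! (n - 1 - k) = app (app (w0 n) ?A) (rev qs)" using bk IH(1) by simp
  also have "\<dots> = app (w0 n) (?A @ rev qs)" by (rule app_append[symmetric])
  finally have c1: "C ! (n - 1 - k) = app (w0 n) (?A @ rev qs)" .
  have c2: "dvr (w0 n) (?A @ rev qs)" unfolding dvr_append using IH dv by simp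
  show ?case unfolding sp e2 using c1 c2 by blast
qed

lemma Psi_FT:
  assumes C: "C \<in> chains n w" and n: "1 \<le> n"
  shows "Psi n C \<in> FT n w"
proof -
  have f1: "1 \<le> i \<and> 1 \<le> j \<and> i + j \<le> n" if h: "Psi n C (i, j) \<noteq> None" for i j
  proof -
    have "1 \<le> i \<and> i < n \<and> 1 \<le> j \<and> i + j \<le> n"
    proof (rule ccontr)
      assume "\<not> (1 \<le> i \<and> i < n \<and> 1 \<le> j \<and> i + j \<le> n)"
      then have "Psi n C (i, j) = None" by (rule Psi_out)
      then show False using h by contradiction
    qed
    then show ?thesis by simp
  qed
  have f2: "1 \<le> a \<and> a \<le> i" if h: "Psi n C (i, j) = Some a" for i j a
  proof -
    have r0: "Psi n C (i, j) \<noteq> None" using h by simp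
    have r: "1 \<le> i" "i < n" "1 \<le> j" "i + j \<le> n" using f1[OF r0] by auto
    obtain qs where qs: "(THE xs. incr_kchain_from i (C ! (n - 1 - i)) (C ! (n - i)) xs) = states (C ! (n - 1 - i)) qs"
      "upd i (C ! (n - 1 - i)) qs" "sorted_wrt (>) (map snd qs)" "app (C ! (n - 1 - i)) qs = C ! (n - i)"
      "distinct (C ! (n - 1 - i))"
      using chain_row[OF C n r(1)] r(2) by fastforce
    have P: "Psi n C (i, j) = (if \<exists>a. (a, n + 1 - j) \<in> set qs then Some (THE a. (a, n + 1 - j) \<in> set qs) else None)"
      using Psi_in[OF r qs(1,2,5)] .
    then obtain a0 where a0: "(a0, n + 1 - j) \<in> set qs" using h by (auto split: if_splits)
    have "(THE a. (a, n + 1 - j) \<in> set qs) = a0" using the_snd[OF a0] sorted_gt_distinct0[OF qs(3)] by simp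
    moreover have ex: "\<exists>a. (a, n + 1 - j) \<in> set qs" using a0 by blast
    ultimately have "a = a0" using h P[unfolded if_P[OF ex]] by simp
    moreover have "rng i (length (C ! (n - 1 - i))) qs" using upd_rng[OF qs(2)] .
    ultimately show "1 \<le> a \<and> a \<le> i" using a0 unfolding rng_def by auto
  qed
  have fl: "flagged n (Psi n C)" unfolding flagged_def using f1 f2 by blast
  have "C ! (n - 1 - (n - 1)) = app (w0 n) (concat (map (rowlist n (Psi n C)) [1..<n - 1 + 1])) \<and>
     dvr (w0 n) (concat (map (rowlist n (Psi n C)) [1..<n - 1 + 1]))"
    using chain_U[OF C n, of "n - 1"] by simp
  moreover have "n - 1 + 1 = n" "n - 1 - (n - 1) = 0" using n by simp_all
  ultimately have "C ! 0 = app (w0 n) (reading_word n (Psi n C)) \<and> dvr (w0 n) (reading_word n (Psi n C))"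
    by (simp add: reading_word_rows)
  then have "associated n (Psi n C) w" using chain_hd[OF C n] by (simp add: associated_dvr)
  then show ?thesis using fl by (simp add: FT_def)
qed

lemma Psi_inj:
  assumes n: "1 \<le> n"
  shows "inj_on (Psi n) (chains n w)"
proof (rule inj_onI)
  fix C C' assume C: "C \<in> chains n w" and C': "C' \<in> chains n w" and e: "Psi n C = Psi n C'"
  show "C = C'"
  proof (rule nth_equalityI)
    show "length C = length C'" using C C' by (simp add: chain_len)
    fix s assume "s < length C"
    then have s: "s < n" using C by (simp add: chain_len)
    have "C ! (n - 1 - (n - 1 - s)) = C' ! (n - 1 - (n - 1 - s))"
      using chain_U[OF C n, of "n - 1 - s"] chain_U[OF C' n, of "n - 1 - s"] e by simp
    moreover have "n - 1 - (n - 1 - s) = s" using s by simp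
    ultimately show "C ! s = C' ! s" by simp
  qed
qed



lemma Psi_surj:
  assumes n: "1 \<le> n" and T: "T \<in> FT n w"
  shows "\<exists>C\<in>chains n w. Psi n C = T"
proof -
  have fl: "flagged n T" and as: "associated n T w" using T by (auto simp: FT_def)
  define ps where "ps = rowlist n T"
  define U where "U = (\<lambda>j. app (w0 n) (concat (map ps [1..<j + 1])))"
  have rw: "reading_word n T = concat (map ps [1..<n])" by (simp add: ps_def reading_word_rows)
  have dv: "dvr (w0 n) (concat (map ps [1..<n]))" and aw: "app (w0 n) (concat (map ps [1..<n])) = w"
    using as rw associated_dvr by auto
  have rp: "\<And>k. rng k n (ps k) \<and> sorted_wrt (<) (map snd (ps k))" using rowlist_props[OF fl] ps_def by simp
  have U0: "U 0 = w0 n" by (simp add: U_def)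
  have Ulen: "\<And>j. length (U j) = n" by (simp add: U_def)
  have Us: "U k = app (U (k - 1)) (ps k)" if k: "1 \<le> k" for k
  proof -
    have e1: "[1..<k + 1] = [1..<k] @ [k]" using k by simp
    have e2: "k - 1 + 1 = k" using k by simp
    have "U k = app (w0 n) (concat (map ps [1..<k]) @ ps k)" unfolding U_def e1 by simp
    also have "\<dots> = app (app (w0 n) (concat (map ps [1..<k]))) (ps k)" by (rule app_append)
    also have "app (w0 n) (concat (map ps [1..<k])) = U (k - 1)" unfolding U_def e2 ..
    finally show ?thesis .
  qed
  have Ud: "dvr (U (k - 1)) (ps k)" if k: "1 \<le> k" "k \<le> n - 1" for k
  proof -
    have "[1..<n] = [1..<k + 1] @ [k + 1..<n]" using k upt_add_eq_append[of 1 "k + 1" "n - (k + 1)"] by simp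
    moreover have "[1..<k + 1] = [1..<k] @ [k]" using k by simp
    ultimately have "concat (map ps [1..<n]) = concat (map ps [1..<k]) @ ps k @ concat (map ps [k + 1..<n])" by simp
    then have "dvr (app (w0 n) (concat (map ps [1..<k]))) (ps k)" using dv by (simp add: dvr_append)
    moreover have "app (w0 n) (concat (map ps [1..<k])) = U (k - 1)" using k unfolding U_def by simp
    ultimately show ?thesis by simp
  qed
  have inv: "j \<le> n - 1 \<Longrightarrow> U j \<in> perms n \<and> Qk (j + 1) (U j)" for j
  proof (induction j)
    case 0 then show ?case using U0 w0_perm Qk_mono[OF w0_Q, of 1] by simp
  next
    case (Suc j)
    define k where "k = Suc j"
    have k: "1 \<le> k" "k \<le> n - 1" using Suc.prems by (auto simp: k_def)
    have kj: "k - 1 = j" by (simp add: k_def)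
    have y: "U j \<in> perms n" "Qk k (U j)" using Suc by (auto simp: k_def)
    have rg: "rng k (length (U j)) (ps k)" using rp Ulen by simp
    have uk: "U k = app (U j) (ps k)" using Us[OF k(1)] kj by simp
    have up: "upd k (U k) (rev (ps k))" using upd_dvr[OF rg] Ud[OF k] kj uk by simp
    have kp: "U k \<in> perms n" using app_perm[OF rg] uk y(1) by (simp add: perms_def)
    have ar: "app (U k) (rev (ps k)) = U j" using app_rev[OF rg] uk by simp
    have "Qk k (U k)" using Q_chain[OF up] kp ar y(2) by (simp add: perms_def)
    then show ?case using kp Qk_mono unfolding k_def by auto
  qed
  have row: "incr_kchain_from k (U k) (U (k - 1)) (states (U k) (rev (ps k))) \<and> upd k (U k) (rev (ps k)) \<and> distinct (U k)"
    if k: "1 \<le> k" "k \<le> n - 1" for k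
  proof -
    have rg: "rng k (length (U (k - 1))) (ps k)" using rp Ulen by simp
    have uk: "U k = app (U (k - 1)) (ps k)" using Us[OF k(1)] .
    have up: "upd k (U k) (rev (ps k))" using upd_dvr[OF rg] Ud[OF k] uk by simp
    have d: "distinct (U k)" using inv[of k] k by (simp add: perms_def)
    have ar: "app (U k) (rev (ps k)) = U (k - 1)" using app_rev[OF rg] uk by simp
    have Qy: "Qk k (U (k - 1))" using inv[of "k - 1"] k by simp
    have s: "sorted_wrt (>) (map snd (rev (ps k)))" using rp[of k] by (simp add: rev_map[symmetric] sorted_wrt_rev)
    show ?thesis using row_exists[OF up d _ s] ar Qy up d by simp
  qed
  define C where "C = map (\<lambda>s. U (n - 1 - s)) [0..<n]"
  have Cn: "C ! s = U (n - 1 - s)" if "s < n" for s using that by (simp add: C_def)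
  have Clen: "length C = n" by (simp add: C_def)
  have Cc: "C \<in> chains n w"
  proof -
    have ne: "C \<noteq> []" using Clen n by auto
    have "n - 1 - 0 + 1 = n" using n by simp
    then have "U (n - 1 - 0) = w" using aw unfolding U_def by simp
    then have "hd C = w" using Cn[of 0] n ne by (simp add: hd_conv_nth)
    moreover have "last C = w0 n" using Cn[of "n - 1"] n ne Clen U0 by (simp add: last_conv_nth)
    moreover have "compatible C (rev [1..<n])"
      unfolding compatible_def
    proof (intro conjI allI impI)
      show "length (rev [1..<n]) + 1 = length C" using Clen n by simp
      fix s assume s: "s < length (rev [1..<n])"
      define k where "k = n - 1 - s"
      have k: "1 \<le> k" "k \<le> n - 1" using s by (auto simp: k_def)
      have "rev [1..<n] ! s = k" using rev_upt_nth[of s n] s by (simp add: k_def)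
      moreover have "C ! s = U k" using Cn s by (simp add: k_def)
      moreover have "C ! (s + 1) = U (k - 1)" using Cn[of "s + 1"] s by (simp add: k_def)
      ultimately show "\<exists>xs. incr_kchain_from (rev [1..<n] ! s) (C ! s) (C ! (s + 1)) xs"
        using row[OF k] by auto
    qed
    ultimately show ?thesis using Clen by (simp add: chains_def)
  qed
  have "Psi n C = T"
  proof (rule ext, clarify)
    fix k c
    show "Psi n C (k, c) = T (k, c)"
    proof (cases "1 \<le> k \<and> k < n \<and> 1 \<le> c \<and> k + c \<le> n")
      case False
      have "T (k, c) = None"
      proof (rule ccontr)
        assume "T (k, c) \<noteq> None"
        then have "1 \<le> k \<and> 1 \<le> c \<and> k + c \<le> n" using fl unfolding flagged_def by blast
        then show False using False by auto
      qed
      then show ?thesis using Psi_out[OF False] by simp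
    next
      case True
      then have r: "1 \<le> k" "k < n" "1 \<le> c" "k + c \<le> n" by auto
      have k: "1 \<le> k" "k \<le> n - 1" using r by auto
      have c1: "C ! (n - 1 - k) = U k" using Cn[of "n - 1 - k"] r by simp
      have c2: "C ! (n - k) = U (k - 1)" using Cn[of "n - k"] r by simp
      have y: "U (k - 1) \<in> perms n" "Qk k (U (k - 1))" using inv[of "k - 1"] k by auto
      have rk: "incr_kchain_from k (U k) (U (k - 1)) (states (U k) (rev (ps k)))" "upd k (U k) (rev (ps k))" "distinct (U k)"
        using row[OF k] by auto
      have th: "(THE xs. incr_kchain_from k (C ! (n - 1 - k)) (C ! (n - k)) xs) = states (C ! (n - 1 - k)) (rev (ps k))"
        unfolding c1 c2 using the_row[OF rk(1) y] .
      have P: "Psi n C (k, c) = (if \<exists>a. (a, n + 1 - c) \<in> set (rev (ps k)) then Some (THE a. (a, n + 1 - c) \<in> set (rev (ps k))) else None)"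
        using Psi_in[OF r th] rk c1 by simp
      have mem: "(a, n + 1 - c) \<in> set (rev (ps k)) \<longleftrightarrow> T (k, c) = Some a" for a
      proof -
        have "n + 1 - (n + 1 - c) = c" "k < n + 1 - c" "n + 1 - c \<le> n" using r by auto
        then show ?thesis using r rowlist_mem[of a "n + 1 - c" n T k] by (simp add: ps_def)
      qed
      have "distinct (map snd (ps k))" using rp[of k] sorted_lt_distinct0 by blast
      then have dist: "distinct (map snd (rev (ps k)))" by (simp add: rev_map[symmetric])
      show ?thesis
      proof (cases "T (k, c)")
        case None
        then show ?thesis using P mem by simp
      next
        case (Some a0)
        have a0: "(a0, n + 1 - c) \<in> set (rev (ps k))" using mem Some by simp
        have ex: "\<exists>a. (a, n + 1 - c) \<in> set (rev (ps k))" using a0 by blast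
        have "(THE a. (a, n + 1 - c) \<in> set (rev (ps k))) = a0" using the_snd[OF a0 dist] .
        then show ?thesis using P[unfolded if_P[OF ex]] Some by simp
      qed
    qed
  qed
  then show ?thesis using Cc by blast
qed

theorem lemma4p12:
  fixes n :: nat and w :: "nat list"
  assumes "1 \<le> n" and "w \<in> perms n"
  shows "bij_betw (Psi n) (chains n w) (FT n w)"
proof (rule bij_betw_imageI)
  show "inj_on (Psi n) (chains n w)" by (rule Psi_inj[OF assms(1)])
  show "Psi n ` chains n w = FT n w"
  proof
    show "Psi n ` chains n w \<subseteq> FT n w" using Psi_FT[OF _ assms(1)] by blast
    show "FT n w \<subseteq> Psi n ` chains n w"
    proof
      fix T assume "T \<in> FT n w"
      then obtain C where "C \<in> chains n w" "Psi n C = T" using Psi_surj[OF assms(1)] by blast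
      then show "T \<in> Psi n ` chains n w" by blast
    qed
  qed
qed

end
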